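(* Let $X$ be a complete separable metric space, identified with its image under a fixed isometric embedding $\iota:X\to\ell_\infty(\mathbb{N})$. Let $g:X\to[0,\infty]$ be lower semicontinuous and let $g_i:X\to[0,\infty]$ be continuous functions with $g_i(x)\le g_j(x)$ for all $x\in X$ and $i\le j$, and $g_i\to g$ pointwise. If $(P^i=(p^i_0,\dots,p^i_{n(i)}))_{i\in\mathbb{N}}$ is a sequence of discrete paths with $\sup_i\mathrm{Len}(P^i)<\infty$ that converges to a curve $\gamma:[0,1]\to X$, then $$\int_\gamma g\,ds\le\liminf_{i\to\infty}\sum_{k=0}^{n(i)-1}g_i(p^i_k)\,d(p^i_k,p^i_{k+1}).$$
   Context: A discrete path is a sequence $P=(p_0,\dots,p_n)$ of points of $X$ with $n\ge1$; $\mathrm{Mesh}(P)=\max_{k\le n-1}d(p_k,p_{k+1})$, $\mathrm{Len}(P)=\sum_{k=0}^{n-1}d(p_k,p_{k+1})$. The linearly interpolating curve $\gamma_P:[0,1]\to\ell_\infty(\mathbb{N})$ is constant $p_0$ if $\mathrm{Len}(P)=0$; otherwise with $t_0=0$, $t_k=\sum_{i=0}^{k-1}d(p_i,p_{i+1})/\mathrm{Len}(P)$, $\gamma_P(t_k)=p_k$ and $\gamma_P$ is affine on each $[t_k,t_{k+1}]$ with $t_k<t_{k+1}$. A sequence of discrete paths $P^i$ converges to a curve $\gamma:[0,1]\to X$ if $\gamma_{P^i}\to\gamma$ uniformly and $\mathrm{Mesh}(P^i)\to0$. *)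

theory Defs
  imports "HOL-Analysis.Analysis"
begin

text \<open>The Banach space l_infinity(N) is modelled as the space of bounded
  (automatically continuous, N being discrete) real functions on nat, with the sup norm.\<close>
type_synonym linf = "nat \<Rightarrow>\<^sub>C real"

definition lsc :: "('a::topological_space \<Rightarrow> ennreal) \<Rightarrow> bool" where
  "lsc g \<longleftrightarrow> (\<forall>a. open {x. a < g x})"

definition curve_length :: "(real \<Rightarrow> 'a::metric_space) \<Rightarrow> real \<Rightarrow> real \<Rightarrow> ennreal" where
  "curve_length \<gamma> a b =
     (SUP (n, t) \<in> {(n, t). t 0 = a \<and> t n = b \<and> (\<forall>k<n. t k \<le> t (Suc k))}.
        \<Sum>k<n. ennreal (dist (\<gamma> (t k)) (\<gamma> (t (Suc k)))))"

definition line_integral :: "('a::metric_space \<Rightarrow> ennreal) \<Rightarrow> (real \<Rightarrow> 'a) \<Rightarrow> ennreal" where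
  "line_integral g \<gamma> =
     (if curve_length \<gamma> 0 1 < \<infinity> then
        (\<integral>\<^sup>+ s \<in> {0..enn2real (curve_length \<gamma> 0 1)}.
            g (\<gamma> (SOME t. t \<in> {0..1} \<and> curve_length \<gamma> 0 t = ennreal s)) \<partial>lborel)
      else \<infinity>)"

text \<open>A discrete path is (p 0, ..., p n) with n >= 1.\<close>
definition dpath_mesh :: "(nat \<Rightarrow> 'a::metric_space) \<Rightarrow> nat \<Rightarrow> real" where
  "dpath_mesh p n = Max ((\<lambda>k. dist (p k) (p (Suc k))) ` {..<n})"

definition dpath_len :: "(nat \<Rightarrow> 'a::metric_space) \<Rightarrow> nat \<Rightarrow> real" where
  "dpath_len p n = (\<Sum>k<n. dist (p k) (p (Suc k)))"

definition dpath_t :: "(nat \<Rightarrow> 'a::metric_space) \<Rightarrow> nat \<Rightarrow> nat \<Rightarrow> real" where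
  "dpath_t p n k = (\<Sum>i<k. dist (p i) (p (Suc i))) / dpath_len p n"

definition interp_curve :: "('a::metric_space \<Rightarrow> linf) \<Rightarrow> (nat \<Rightarrow> 'a) \<Rightarrow> nat \<Rightarrow> real \<Rightarrow> linf" where
  "interp_curve \<iota> p n t =
     (if dpath_len p n = 0 then \<iota> (p 0)
      else (let k = (GREATEST k. k < n \<and> dpath_t p n k \<le> t \<and> dpath_t p n k < dpath_t p n (Suc k))
            in \<iota> (p k) + ((t - dpath_t p n k) / (dpath_t p n (Suc k) - dpath_t p n k))
                          *\<^sub>R (\<iota> (p (Suc k)) - \<iota> (p k))))"

end

theory Submission
  imports Defs
begin

abbreviation dd :: "(nat \<Rightarrow> 'a::metric_space) \<Rightarrow> nat \<Rightarrow> real" where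
  "dd p k \<equiv> dist (p k) (p (Suc k))"

lemma dist_chain:
  fixes p :: "nat \<Rightarrow> 'a::metric_space"
  assumes "a \<le> b"
  shows "dist (p a) (p b) \<le> (\<Sum>l\<in>{a..<b}. dd p l)"
  using assms
proof (induction b)
  case 0 then show ?case by simp
next
  case (Suc b)
  show ?case
  proof (cases "a = Suc b")
    case True then show ?thesis by simp
  next
    case False
    then have "a \<le> b" using Suc.prems by simp
    have "dist (p a) (p (Suc b)) \<le> dist (p a) (p b) + dist (p b) (p (Suc b))" by (rule dist_triangle)
    also have "\<dots> \<le> (\<Sum>l\<in>{a..<b}. dd p l) + dist (p b) (p (Suc b))" using Suc.IH[OF \<open>a \<le> b\<close>] by simp
    also have "\<dots> = (\<Sum>l\<in>{a..<Suc b}. dd p l)" using \<open>a \<le> b\<close> by simp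
    finally show ?thesis .
  qed
qed

lemma sum_lessThan_split:
  fixes f :: "nat \<Rightarrow> real"
  assumes "a \<le> b"
  shows "sum f {..<b} = sum f {..<a} + sum f {a..<b}"
  by (metis assms atLeast0LessThan sum.atLeastLessThan_concat zero_le)

lemma dpath_len_nonneg: "dpath_len p n \<ge> 0"
  unfolding dpath_len_def by (simp add: sum_nonneg)

lemma dd_le_len: "k < n \<Longrightarrow> dd p k \<le> dpath_len p n"
  unfolding dpath_len_def by (rule member_le_sum) auto

lemma dpath_t_mono: "a \<le> b \<Longrightarrow> dpath_t p n a \<le> dpath_t p n b"
  unfolding dpath_t_def
  by (intro divide_right_mono sum_mono2 dpath_len_nonneg) auto

lemma dpath_t_0[simp]: "dpath_t p n 0 = 0"
  unfolding dpath_t_def by simp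

lemma dpath_t_nonneg: "dpath_t p n k \<ge> 0"
  using dpath_t_mono[of 0 k p n] by simp

lemma dpath_t_n: "dpath_len p n > 0 \<Longrightarrow> dpath_t p n n = 1"
  unfolding dpath_t_def dpath_len_def by simp

lemma dpath_t_le1: "dpath_len p n > 0 \<Longrightarrow> k \<le> n \<Longrightarrow> dpath_t p n k \<le> 1"
  using dpath_t_mono[of k n p n] dpath_t_n[of p n] by simp

lemma len_t: "dpath_len p n > 0 \<Longrightarrow> dpath_len p n * dpath_t p n k = (\<Sum>l<k. dd p l)"
  unfolding dpath_t_def by simp

lemma len_t_diff: "dpath_len p n > 0 \<Longrightarrow> a \<le> b \<Longrightarrow>
   dpath_len p n * (dpath_t p n b - dpath_t p n a) = (\<Sum>l\<in>{a..<b}. dd p l)"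
  using len_t[of p n a] len_t[of p n b] sum_lessThan_split[of a b "dd p"]
  by (simp add: right_diff_distrib)

lemma dd_eq: "k < n \<Longrightarrow> dd p k = dpath_len p n * (dpath_t p n (Suc k) - dpath_t p n k)"
proof (cases "dpath_len p n > 0")
  case True
  then show ?thesis using len_t_diff[of p n k "Suc k"] by simp
next
  case False
  assume "k < n"
  then have "dd p k \<le> dpath_len p n" by (rule dd_le_len)
  with False dpath_len_nonneg[of p n] show ?thesis by simp
qed

lemma dist_le_t: "dpath_len p n > 0 \<Longrightarrow> a \<le> b \<Longrightarrow>
   dist (p a) (p b) \<le> dpath_len p n * (dpath_t p n b - dpath_t p n a)"
  using dist_chain[of a b p] len_t_diff[of p n a b] by simp

lemma len0_const: "dpath_len p n = 0 \<Longrightarrow> j \<le> n \<Longrightarrow> p j = p 0"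
proof -
  assume L: "dpath_len p n = 0" and j: "j \<le> n"
  have "dist (p 0) (p j) \<le> (\<Sum>l\<in>{0..<j}. dd p l)" by (rule dist_chain) simp
  also have "\<dots> \<le> (\<Sum>l\<in>{0..<j}. 0)"
    using dd_le_len[of _ n p] L j by (intro sum_mono) auto
  finally show ?thesis by simp
qed

lemma interp_K:
  fixes p :: "nat \<Rightarrow> 'a::metric_space" and \<iota> :: "'a \<Rightarrow> linf"
  assumes L: "dpath_len p n > 0" and u: "0 \<le> u" "u \<le> 1"
  defines "T \<equiv> dpath_t p n"
  defines "K \<equiv> GREATEST k. k < n \<and> T k \<le> u \<and> T k < T (Suc k)"
  shows "K < n \<and> T K \<le> u \<and> T K < T (Suc K) \<and> u \<le> T (Suc K) \<and>
    interp_curve \<iota> p n u = \<iota> (p K) + ((u - T K) / (T (Suc K) - T K)) *\<^sub>R (\<iota> (p (Suc K)) - \<iota> (p K))"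
proof -
  define P where "P k \<longleftrightarrow> k < n \<and> T k \<le> u \<and> T k < T (Suc k)" for k
  have ex: "\<exists>k. 0 < dd p k"
  proof (rule ccontr)
    assume "\<not> ?thesis"
    then have "\<forall>k. dd p k = 0" by (metis zero_le_dist order_less_le)
    then have "dpath_len p n = 0" unfolding dpath_len_def by simp
    with L show False by simp
  qed
  define k0 where "k0 = (LEAST k. 0 < dd p k)"
  have k0: "0 < dd p k0" unfolding k0_def using ex by (rule LeastI_ex)
  have below: "dd p l = 0" if "l < k0" for l
    using not_less_Least[OF that[unfolded k0_def]] by (metis zero_le_dist order_less_le)
  have "k0 < n"
  proof (rule ccontr)
    assume "\<not> k0 < n"
    then have "dpath_len p n = 0" unfolding dpath_len_def using below by simp
    with L show False by simp
  qed
  have Tk0: "T k0 = 0" unfolding T_def dpath_t_def using below by simp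
  have "T (Suc k0) > 0" unfolding T_def dpath_t_def using below k0 L by simp
  then have Pk0: "P k0" unfolding P_def using Tk0 \<open>k0 < n\<close> u by simp
  have bnd: "\<forall>y. P y \<longrightarrow> y \<le> n" unfolding P_def by simp
  have PK: "P K" unfolding K_def P_def[symmetric] using Pk0 bnd by (metis GreatestI_nat)
  have Kmax: "y \<le> K" if "P y" for y unfolding K_def P_def[symmetric] using that bnd
    by (metis Greatest_le_nat)
  have up: "u \<le> T (Suc K)"
  proof (rule ccontr)
    assume "\<not> ?thesis"
    then have lt: "T (Suc K) < u" by simp
    have "Suc K < n"
    proof (rule ccontr)
      assume "\<not> Suc K < n"
      then have "Suc K = n" using PK unfolding P_def by simp
      then have "T (Suc K) = 1" unfolding T_def using dpath_t_n[OF L] by simp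
      with lt u show False by simp
    qed
    define S where "S = {j. Suc K \<le> j \<and> j < n \<and> T j < u}"
    have "finite S" unfolding S_def by simp
    have "Suc K \<in> S" unfolding S_def using \<open>Suc K < n\<close> lt by simp
    define j where "j = Max S"
    have jS: "j \<in> S" unfolding j_def using \<open>finite S\<close> \<open>Suc K \<in> S\<close> by (metis Max_in empty_iff)
    have "u \<le> T (Suc j)"
    proof (cases "Suc j < n")
      case True
      have "Suc j \<notin> S" using \<open>finite S\<close> j_def by (metis Max_ge Suc_n_not_le_n)
      then show ?thesis using True jS unfolding S_def by auto
    next
      case False
      then have "Suc j = n" using jS unfolding S_def by simp
      then show ?thesis unfolding T_def using dpath_t_n[OF L] u by simp
    qed
    then have "P j" unfolding P_def using jS unfolding S_def by auto
    then have "j \<le> K" by (rule Kmax)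
    then show False using jS unfolding S_def by simp
  qed
  have "interp_curve \<iota> p n u = \<iota> (p K) + ((u - T K) / (T (Suc K) - T K)) *\<^sub>R (\<iota> (p (Suc K)) - \<iota> (p K))"
    unfolding interp_curve_def K_def T_def using L by (simp add: Let_def)
  then show ?thesis using PK up unfolding P_def by simp
qed

lemma interp_vertex:
  fixes p :: "nat \<Rightarrow> 'a::metric_space" and \<iota> :: "'a \<Rightarrow> linf"
  assumes iso: "\<And>x y. dist (\<iota> x) (\<iota> y) = dist x y" and u: "0 \<le> u" "u \<le> 1" and j: "j \<le> n"
  shows "dist (interp_curve \<iota> p n u) (\<iota> (p j)) \<le> dpath_len p n * \<bar>u - dpath_t p n j\<bar>"
proof (cases "dpath_len p n > 0")
  case False
  then have L0: "dpath_len p n = 0" using dpath_len_nonneg[of p n] by simp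
  then have "interp_curve \<iota> p n u = \<iota> (p 0)" unfolding interp_curve_def by simp
  then show ?thesis using len0_const[OF L0 j] L0 by simp
next
  case L: True
  define T where "T = dpath_t p n"
  define K where "K = (GREATEST k. k < n \<and> T k \<le> u \<and> T k < T (Suc k))"
  note KK = interp_K[OF L u, of \<iota>, folded T_def, folded K_def]
  define lam where "lam = (u - T K) / (T (Suc K) - T K)"
  have lam: "0 \<le> lam" "lam \<le> 1" using KK by (auto simp: lam_def divide_simps)
  have dK: "dd p K = dpath_len p n * (T (Suc K) - T K)" using dd_eq[of K n p] KK T_def by simp
  have posK: "T (Suc K) - T K > 0" using KK by simp
  have iv: "interp_curve \<iota> p n u = \<iota> (p K) + lam *\<^sub>R (\<iota> (p (Suc K)) - \<iota> (p K))" using KK lam_def by simp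
  have d1: "dist (interp_curve \<iota> p n u) (\<iota> (p K)) = dpath_len p n * (u - T K)"
  proof -
    have "dist (interp_curve \<iota> p n u) (\<iota> (p K)) = norm (lam *\<^sub>R (\<iota> (p (Suc K)) - \<iota> (p K)))"
      unfolding iv dist_norm by simp
    also have "\<dots> = lam * dd p K" using lam iso[of "p (Suc K)" "p K"] by (simp add: dist_norm dist_commute)
    also have "\<dots> = dpath_len p n * (u - T K)" unfolding lam_def dK using posK by (simp add: field_simps)
    finally show ?thesis .
  qed
  have d2: "dist (interp_curve \<iota> p n u) (\<iota> (p (Suc K))) = dpath_len p n * (T (Suc K) - u)"
  proof -
    have "interp_curve \<iota> p n u - \<iota> (p (Suc K)) = (lam - 1) *\<^sub>R (\<iota> (p (Suc K)) - \<iota> (p K))"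
      unfolding iv by (simp add: algebra_simps)
    then have "dist (interp_curve \<iota> p n u) (\<iota> (p (Suc K))) = \<bar>lam - 1\<bar> * dd p K"
      using iso[of "p (Suc K)" "p K"] by (simp add: dist_norm dist_commute)
    also have "\<dots> = (1 - lam) * dd p K" using lam by simp
    also have "\<dots> = dpath_len p n * (T (Suc K) - u)" unfolding lam_def dK using posK by (simp add: field_simps)
    finally show ?thesis .
  qed
  show ?thesis
  proof (cases "j \<le> K")
    case True
    have "dist (interp_curve \<iota> p n u) (\<iota> (p j)) \<le> dist (interp_curve \<iota> p n u) (\<iota> (p K)) + dist (\<iota> (p K)) (\<iota> (p j))" by (rule dist_triangle)
    also have "\<dots> \<le> dpath_len p n * (u - T K) + dpath_len p n * (T K - T j)"
      using d1 dist_le_t[OF L True] iso by (simp add: dist_commute T_def)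
    also have "\<dots> = dpath_len p n * \<bar>u - T j\<bar>" using KK dpath_t_mono[OF True, of p n] T_def by (simp add: algebra_simps)
    finally show ?thesis unfolding T_def .
  next
    case False
    then have SK: "Suc K \<le> j" by simp
    have "dist (interp_curve \<iota> p n u) (\<iota> (p j)) \<le> dist (interp_curve \<iota> p n u) (\<iota> (p (Suc K))) + dist (\<iota> (p (Suc K))) (\<iota> (p j))" by (rule dist_triangle)
    also have "\<dots> \<le> dpath_len p n * (T (Suc K) - u) + dpath_len p n * (T j - T (Suc K))"
      using d2 dist_le_t[OF L SK] iso by (simp add: dist_commute T_def)
    also have "\<dots> = dpath_len p n * \<bar>u - T j\<bar>" using KK dpath_t_mono[OF SK, of p n] T_def by (simp add: algebra_simps)
    finally show ?thesis unfolding T_def .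
  qed
qed

lemma interp_lip_aux:
  fixes p :: "nat \<Rightarrow> 'a::metric_space" and \<iota> :: "'a \<Rightarrow> linf"
  assumes iso: "\<And>x y. dist (\<iota> x) (\<iota> y) = dist x y" and uv: "0 \<le> u" "u \<le> v" "v \<le> 1"
  shows "dist (interp_curve \<iota> p n u) (interp_curve \<iota> p n v) \<le> dpath_len p n * (v - u)"
proof (cases "dpath_len p n > 0")
  case False
  then have L0: "dpath_len p n = 0" using dpath_len_nonneg[of p n] by simp
  then show ?thesis unfolding interp_curve_def by simp
next
  case L: True
  define T where "T = dpath_t p n"
  define Ku where "Ku = (GREATEST k. k < n \<and> T k \<le> u \<and> T k < T (Suc k))"
  define Kv where "Kv = (GREATEST k. k < n \<and> T k \<le> v \<and> T k < T (Suc k))"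
  note KU = interp_K[OF L, of u \<iota>, folded T_def, folded Ku_def]
  note KV = interp_K[OF L, of v \<iota>, folded T_def, folded Kv_def]
  have u1: "u \<le> 1" "0 \<le> v" using uv by auto
  have "Ku \<le> Kv"
  proof -
    have "Ku < n \<and> T Ku \<le> v \<and> T Ku < T (Suc Ku)" using KU uv by auto
    then show ?thesis unfolding Kv_def by (rule Greatest_le_nat[where b=n]) auto
  qed
  show ?thesis
  proof (cases "Ku = Kv")
    case True
    define K where "K = Kv"
    have dK: "dd p K = dpath_len p n * (T (Suc K) - T K)" using dd_eq[of K n p] KV uv T_def K_def by simp
    have pos: "T (Suc K) - T K > 0" using KV uv K_def by simp
    have eU: "interp_curve \<iota> p n u = \<iota> (p K) + ((u - T K) / (T (Suc K) - T K)) *\<^sub>R (\<iota> (p (Suc K)) - \<iota> (p K))"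
      using KU uv True K_def by simp
    have eV: "interp_curve \<iota> p n v = \<iota> (p K) + ((v - T K) / (T (Suc K) - T K)) *\<^sub>R (\<iota> (p (Suc K)) - \<iota> (p K))"
      using KV uv K_def by simp
    have "interp_curve \<iota> p n v - interp_curve \<iota> p n u =
       ((v - T K) / (T (Suc K) - T K) - (u - T K) / (T (Suc K) - T K)) *\<^sub>R (\<iota> (p (Suc K)) - \<iota> (p K))"
      unfolding eU eV by (simp add: scaleR_diff_left)
    also have "\<dots> = ((v - u) / (T (Suc K) - T K)) *\<^sub>R (\<iota> (p (Suc K)) - \<iota> (p K))"
      by (simp add: diff_divide_distrib)
    finally have eqd: "interp_curve \<iota> p n v - interp_curve \<iota> p n u = ((v - u) / (T (Suc K) - T K)) *\<^sub>R (\<iota> (p (Suc K)) - \<iota> (p K))" .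
    have "dist (interp_curve \<iota> p n u) (interp_curve \<iota> p n v) = norm (interp_curve \<iota> p n v - interp_curve \<iota> p n u)"
      by (simp add: dist_norm norm_minus_commute)
    also have "\<dots> = \<bar>(v - u) / (T (Suc K) - T K)\<bar> * norm (\<iota> (p (Suc K)) - \<iota> (p K))"
      unfolding eqd by simp
    also have "\<dots> = ((v - u) / (T (Suc K) - T K)) * dd p K"
      using iso[of "p (Suc K)" "p K"] uv pos by (simp add: dist_norm dist_commute)
    finally have "dist (interp_curve \<iota> p n u) (interp_curve \<iota> p n v) = ((v - u) / (T (Suc K) - T K)) * dd p K" .
    also have "\<dots> = dpath_len p n * (v - u)" unfolding dK using pos by (simp add: field_simps)
    finally show ?thesis by simp
  next
    case False
    then have SK: "Suc Ku \<le> Kv" "Suc Ku \<le> n" using \<open>Ku \<le> Kv\<close> KV uv by auto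
    have m: "T (Suc Ku) \<le> T Kv" unfolding T_def by (rule dpath_t_mono) (use SK in simp)
    have "dist (interp_curve \<iota> p n u) (interp_curve \<iota> p n v) \<le>
        dist (interp_curve \<iota> p n u) (\<iota> (p (Suc Ku))) + dist (interp_curve \<iota> p n v) (\<iota> (p (Suc Ku)))"
      by (rule dist_triangle2)
    also have "\<dots> \<le> dpath_len p n * \<bar>u - T (Suc Ku)\<bar> + dpath_len p n * \<bar>v - T (Suc Ku)\<bar>"
      using interp_vertex[OF iso _ _ SK(2), of u] interp_vertex[OF iso _ _ SK(2), of v] uv T_def
      by (intro add_mono) auto
    also have "\<dots> = dpath_len p n * (v - u)" using KU KV uv m by (simp add: algebra_simps)
    finally show ?thesis .
  qed
qed

lemma interp_lip:
  fixes p :: "nat \<Rightarrow> 'a::metric_space" and \<iota> :: "'a \<Rightarrow> linf"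
  assumes iso: "\<And>x y. dist (\<iota> x) (\<iota> y) = dist x y" and uv: "u \<in> {0..1}" "v \<in> {0..1}"
  shows "dist (interp_curve \<iota> p n u) (interp_curve \<iota> p n v) \<le> dpath_len p n * \<bar>v - u\<bar>"
proof (cases "u \<le> v")
  case True then show ?thesis using interp_lip_aux[OF iso, of u v p n] uv by simp
next
  case False then show ?thesis using interp_lip_aux[OF iso, of v u p n] uv by (simp add: dist_commute)
qed

lemma liminf_cmult_ennreal:
  fixes c :: ennreal
  assumes "c < top"
  shows "liminf (\<lambda>i. c * x i) = c * liminf x"
proof -
  have "continuous_on UNIV (\<lambda>y::ennreal. c * y)"
    using ennreal_continuous_on_cmult[OF assms continuous_on_id] by simp
  moreover have "mono (\<lambda>y::ennreal. c * y)" by (simp add: mono_def mult_left_mono)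
  ultimately show ?thesis
    using Liminf_compose_continuous_mono[of "\<lambda>y. c * y" sequentially x] by simp
qed

lemma chain_mono:
  fixes u :: "nat \<Rightarrow> real"
  assumes "\<forall>k<N. u k \<le> u (Suc k)" "i \<le> j" "j \<le> N"
  shows "u i \<le> u j"
  using assms(2,3)
proof (induction j)
  case 0 then show ?case by simp
next
  case (Suc j)
  show ?case
  proof (cases "i = Suc j")
    case True then show ?thesis by simp
  next
    case False
    then have "i \<le> j" "j < N" using Suc.prems by auto
    then show ?thesis using Suc.IH assms(1) by (meson dual_order.trans less_imp_le_nat)
  qed
qed

lemma CL_upper:
  assumes "u 0 = a" "u N = b" "\<forall>k<N. u k \<le> u (Suc k)"
  shows "(\<Sum>k<N. ennreal (dist (c (u k)) (c (u (Suc k))))) \<le> curve_length c a b"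
  unfolding curve_length_def
  by (rule SUP_upper2[of "(N, u)"]) (use assms in auto)

lemma CL_least:
  assumes "\<And>N u. u 0 = a \<Longrightarrow> u N = b \<Longrightarrow> \<forall>k<N. u k \<le> u (Suc k) \<Longrightarrow>
     (\<Sum>k<N. ennreal (dist (c (u k)) (c (u (Suc k))))) \<le> y"
  shows "curve_length c a b \<le> y"
  unfolding curve_length_def
  by (rule SUP_least) (use assms in auto)

lemma CL_add_dist:
  fixes c :: "real \<Rightarrow> 'a::metric_space"
  assumes "x \<le> a" "a \<le> b"
  shows "curve_length c x a + ennreal (dist (c a) (c b)) \<le> curve_length c x b"
proof -
  let ?S = "{(n, t). t 0 = x \<and> t n = a \<and> (\<forall>k<n. t k \<le> t (Suc k))}"
  have ne: "?S \<noteq> {}"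
    using assms by (intro ex_in_conv[THEN iffD1] exI[of _ "(1::nat, \<lambda>k::nat. if k = 0 then x else a)"]) auto
  have "curve_length c x a + ennreal (dist (c a) (c b)) =
     (SUP (n, t) \<in> ?S. (\<Sum>k<n. ennreal (dist (c (t k)) (c (t (Suc k))))) + ennreal (dist (c a) (c b)))"
    unfolding curve_length_def using ennreal_SUP_add_left[OF ne,
      of "\<lambda>(n,t). \<Sum>k<n. ennreal (dist (c (t k)) (c (t (Suc k))))" "ennreal (dist (c a) (c b))"]
    by (simp add: case_prod_beta')
  also have "\<dots> \<le> curve_length c x b"
  proof (rule SUP_least)
    fix z assume "z \<in> ?S"
    then obtain N u where z: "z = (N, u)" and u: "u 0 = x" "u N = a" "\<forall>k<N. u k \<le> u (Suc k)" by auto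
    define v where "v = u(Suc N := b)"
    have v: "v 0 = x" "v (Suc N) = b" "\<forall>k<Suc N. v k \<le> v (Suc k)"
      using u assms by (auto simp: v_def less_Suc_eq)
    have "(\<Sum>k<N. ennreal (dist (c (u k)) (c (u (Suc k))))) + ennreal (dist (c a) (c b)) =
        (\<Sum>k<Suc N. ennreal (dist (c (v k)) (c (v (Suc k)))))"
      using u by (simp add: v_def)
    also have "\<dots> \<le> curve_length c x b" by (rule CL_upper[OF v])
    finally show "(case z of (n, t) \<Rightarrow> (\<Sum>k<n. ennreal (dist (c (t k)) (c (t (Suc k))))) + ennreal (dist (c a) (c b))) \<le> curve_length c x b"
      unfolding z by simp
  qed
  finally show ?thesis .
qed

lemma CL_split:
  fixes c :: "real \<Rightarrow> 'a::metric_space"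
  assumes "x \<le> y" "y \<le> z"
  shows "curve_length c x z \<le> curve_length c x y + curve_length c y z"
proof (rule CL_least)
  fix N u assume u: "u 0 = x" "u N = z" "\<forall>k<N. u k \<le> u (Suc k)"
  define v where "v k = min (u k) y" for k
  define w where "w k = max (u k) y" for k
  have v: "v 0 = x" "v N = y" "\<forall>k<N. v k \<le> v (Suc k)"
    using u assms by (auto simp: v_def)
  have w: "w 0 = y" "w N = z" "\<forall>k<N. w k \<le> w (Suc k)"
    using u assms by (auto simp: w_def)
  have le: "dist (c (u k)) (c (u (Suc k))) \<le> dist (c (v k)) (c (v (Suc k))) + dist (c (w k)) (c (w (Suc k)))"
    if "k < N" for k
  proof -
    have m: "u k \<le> u (Suc k)" using u that by auto
    show ?thesis
    proof (cases "u (Suc k) \<le> y")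
      case True then show ?thesis using m by (simp add: v_def w_def)
    next
      case False
      show ?thesis
      proof (cases "y \<le> u k")
        case True then show ?thesis using m by (simp add: v_def w_def)
      next
        case False
        then show ?thesis using \<open>\<not> u (Suc k) \<le> y\<close> by (simp add: v_def w_def dist_triangle)
      qed
    qed
  qed
  have "(\<Sum>k<N. ennreal (dist (c (u k)) (c (u (Suc k))))) = ennreal (\<Sum>k<N. dist (c (u k)) (c (u (Suc k))))"
    by simp
  also have "\<dots> \<le> ennreal ((\<Sum>k<N. dist (c (v k)) (c (v (Suc k)))) + (\<Sum>k<N. dist (c (w k)) (c (w (Suc k)))))"
  proof (intro ennreal_leI)
    have "(\<Sum>k<N. dist (c (u k)) (c (u (Suc k)))) \<le> (\<Sum>k<N. dist (c (v k)) (c (v (Suc k))) + dist (c (w k)) (c (w (Suc k))))"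
      by (rule sum_mono) (simp add: le)
    then show "(\<Sum>k<N. dist (c (u k)) (c (u (Suc k)))) \<le> (\<Sum>k<N. dist (c (v k)) (c (v (Suc k)))) + (\<Sum>k<N. dist (c (w k)) (c (w (Suc k))))"
      by (simp add: sum.distrib)
  qed
  also have "\<dots> = (\<Sum>k<N. ennreal (dist (c (v k)) (c (v (Suc k))))) + (\<Sum>k<N. ennreal (dist (c (w k)) (c (w (Suc k)))))"
    by (simp add: ennreal_plus sum_nonneg)
  also have "\<dots> \<le> curve_length c x y + curve_length c y z"
    by (intro add_mono CL_upper v w)
  finally show "(\<Sum>k<N. ennreal (dist (c (u k)) (c (u (Suc k))))) \<le> curve_length c x y + curve_length c y z" .
qed

lemma CL_lsc:
  fixes c :: "real \<Rightarrow> 'a::metric_space" and gi :: "nat \<Rightarrow> real \<Rightarrow> linf" and \<iota> :: "'a \<Rightarrow> linf"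
  assumes iso: "\<And>x y. dist (\<iota> x) (\<iota> y) = dist x y"
    and unif: "uniform_limit {0..1} gi (\<iota> \<circ> c) sequentially"
    and lip: "\<And>i u v. u \<in> {0..1} \<Longrightarrow> v \<in> {0..1} \<Longrightarrow> dist (gi i u) (gi i v) \<le> Lf i * \<bar>v - u\<bar>"
    and Lf: "\<And>i. Lf i \<ge> 0"
    and ab: "0 \<le> a" "a \<le> b" "b \<le> 1"
  shows "curve_length c a b \<le> ennreal (b - a) * liminf (\<lambda>i. ennreal (Lf i))"
proof (rule CL_least)
  fix N u assume u: "u 0 = a" "u N = b" "\<forall>k<N. u k \<le> u (Suc k)"
  have uin: "u k \<in> {0..1}" if "k \<le> N" for k
    using chain_mono[OF u(3), of 0 k] chain_mono[OF u(3), of k N] that u ab by auto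
  define X where "X = (\<Sum>k<N. dist (c (u k)) (c (u (Suc k))))"
  define x where "x i = (\<Sum>k<N. dist (gi i (u k)) (gi i (u (Suc k))))" for i
  have pt: "(\<lambda>i. gi i t) \<longlonglongrightarrow> \<iota> (c t)" if "t \<in> {0..1}" for t
    using tendsto_uniform_limitI[OF unif that] by simp
  have "x \<longlonglongrightarrow> (\<Sum>k<N. dist (\<iota> (c (u k))) (\<iota> (c (u (Suc k)))))"
    unfolding x_def by (intro tendsto_sum tendsto_dist pt uin) auto
  then have xX: "x \<longlonglongrightarrow> X" unfolding X_def iso .
  have xb: "x i \<le> Lf i * (b - a)" for i
  proof -
    have "x i \<le> (\<Sum>k<N. Lf i * (u (Suc k) - u k))"
      unfolding x_def using lip uin u(3) by (intro sum_mono) (metis abs_of_nonneg diff_ge_0_iff_ge lessThan_iff less_imp_le_nat Suc_leI)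
    also have "\<dots> = Lf i * (b - a)"
      by (simp add: sum_distrib_left[symmetric] sum_lessThan_telescope u)
    finally show ?thesis .
  qed
  have "(\<Sum>k<N. ennreal (dist (c (u k)) (c (u (Suc k))))) = ennreal X" unfolding X_def by simp
  also have "\<dots> = liminf (\<lambda>i. ennreal (x i))"
    using lim_imp_Liminf[OF trivial_limit_sequentially tendsto_ennrealI[OF xX]] by simp
  also have "\<dots> \<le> liminf (\<lambda>i. ennreal (b - a) * ennreal (Lf i))"
    using xb ab Lf by (intro Liminf_mono always_eventually allI) (simp add: ennreal_mult[symmetric] mult.commute ennreal_leI)
  also have "\<dots> = ennreal (b - a) * liminf (\<lambda>i. ennreal (Lf i))"
    by (rule liminf_cmult_ennreal) simp
  finally show "(\<Sum>k<N. ennreal (dist (c (u k)) (c (u (Suc k))))) \<le> ennreal (b - a) * liminf (\<lambda>i. ennreal (Lf i))" .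
qed

lemma near_compact_cont:
  fixes f :: "'a::metric_space \<Rightarrow> real" and c :: "real \<Rightarrow> 'a"
  assumes fc: "continuous_on UNIV f" and cc: "continuous_on {0..1} c" and e: "e > 0"
  shows "\<exists>d>0. \<forall>t\<in>{0..1}. \<forall>x. dist x (c t) < d \<longrightarrow> f (c t) - e < f x"
proof (rule ccontr)
  assume "\<not> ?thesis"
  note nt = this
  have H: "\<exists>t\<in>{0..1}. \<exists>x. dist x (c t) < d \<and> f x \<le> f (c t) - e" if "d > 0" for d
  proof (rule ccontr)
    assume "\<not> (\<exists>t\<in>{0..1}. \<exists>x. dist x (c t) < d \<and> f x \<le> f (c t) - e)"
    then have "\<forall>t\<in>{0..1}. \<forall>x. dist x (c t) < d \<longrightarrow> f (c t) - e < f x" by (auto simp: not_le)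
    with that nt show False by blast
  qed
  have "\<forall>j::nat. \<exists>tx. fst tx \<in> {0..1} \<and> dist (snd tx) (c (fst tx)) < 1 / Suc j \<and> f (snd tx) \<le> f (c (fst tx)) - e"
  proof
    fix j :: nat
    have "(1::real) / Suc j > 0" by simp
    then obtain t0 x0 where "t0 \<in> {0..1}" "dist x0 (c t0) < 1 / Suc j" "f x0 \<le> f (c t0) - e"
      using H by blast
    then show "\<exists>tx. fst tx \<in> {0..1} \<and> dist (snd tx) (c (fst tx)) < 1 / Suc j \<and> f (snd tx) \<le> f (c (fst tx)) - e"
      by (intro exI[of _ "(t0, x0)"]) simp
  qed
  then obtain TX where TX: "\<forall>j::nat. fst (TX j) \<in> {0..1} \<and> dist (snd (TX j)) (c (fst (TX j))) < 1 / Suc j \<and> f (snd (TX j)) \<le> f (c (fst (TX j))) - e"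
    using choice[OF \<open>\<forall>j::nat. _\<close>] by blast
  define t where "t j = fst (TX j)" for j
  define x where "x j = snd (TX j)" for j
  have tx: "\<And>j. t j \<in> {0..1}" "\<And>j. dist (x j) (c (t j)) < 1 / Suc j"
      "\<And>j. f (x j) \<le> f (c (t j)) - e"
    using TX unfolding t_def x_def by auto
  have sc: "seq_compact {0..1::real}" by (rule compact_imp_seq_compact) simp
  have "\<forall>j. t j \<in> {0..1}" using tx(1) by simp
  then obtain l r where lr: "l \<in> {0..1}" "strict_mono r" "(t \<circ> r) \<longlonglongrightarrow> l"
    by (rule seq_compactE[OF sc])
  have ct: "(\<lambda>j. c ((t \<circ> r) j)) \<longlonglongrightarrow> c l"
    by (rule continuous_on_tendsto_compose[OF cc lr(3) lr(1)]) (use tx(1) in simp)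
  have inv: "(\<lambda>j. 1 / real (Suc (r j))) \<longlonglongrightarrow> 0"
  proof -
    have "(\<lambda>j. 1 / real (Suc j)) \<longlonglongrightarrow> 0" by (rule LIMSEQ_Suc[OF lim_const_over_n]) 
    from LIMSEQ_subseq_LIMSEQ[OF this lr(2)] show ?thesis by (simp add: o_def)
  qed
  have d0: "(\<lambda>j. dist (x (r j)) (c (t (r j)))) \<longlonglongrightarrow> 0"
    by (rule tendsto_sandwich[OF _ _ tendsto_const inv]) (use tx(2) in \<open>auto intro!: always_eventually less_imp_le\<close>)
  have "(\<lambda>j. dist (c (t (r j))) (c l)) \<longlonglongrightarrow> 0"
    using tendsto_dist_iff[THEN iffD1, OF ct] by (simp add: o_def)
  then have "(\<lambda>j. dist (x (r j)) (c (t (r j))) + dist (c (t (r j))) (c l)) \<longlonglongrightarrow> 0"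
    using tendsto_add[OF d0] by simp
  note h = this
  have "(\<lambda>j. dist (x (r j)) (c l)) \<longlonglongrightarrow> 0"
    by (rule tendsto_sandwich[OF always_eventually always_eventually tendsto_const h]) (simp_all add: dist_triangle)
  then have xl: "(\<lambda>j. x (r j)) \<longlonglongrightarrow> c l" by (rule tendsto_dist_iff[THEN iffD2])
  have f1: "(\<lambda>j. f (x (r j))) \<longlonglongrightarrow> f (c l)"
    by (rule continuous_on_tendsto_compose[OF fc xl]) auto
  have f2: "(\<lambda>j. f (c (t (r j))) - e) \<longlonglongrightarrow> f (c l) - e"
    by (intro tendsto_diff tendsto_const continuous_on_tendsto_compose[OF fc]) (use ct in \<open>auto simp: o_def\<close>)
  have "f (c l) \<le> f (c l) - e"
    by (rule LIMSEQ_le[OF f1 f2]) (use tx(3) in auto)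
  with e show False by simp
qed

definition ov :: "real \<Rightarrow> real \<Rightarrow> real \<Rightarrow> real \<Rightarrow> real" where
  "ov a b c d = max 0 (min b d - max a c)"

lemma ov_comm: "ov a b c d = ov c d a b"
  unfolding ov_def by (simp add: min.commute max.commute)

lemma ov_nonneg: "ov a b c d \<ge> 0"
  unfolding ov_def by simp

lemma ov_sum:
  fixes x :: "nat \<Rightarrow> real"
  assumes "\<forall>k<N. x k \<le> x (Suc k)" "x 0 \<le> c" "c \<le> d" "d \<le> x N"
  shows "(\<Sum>k<N. ov (x k) (x (Suc k)) c d) = d - c"
proof -
  define cl where "cl y = min (max y c) d" for y
  have "ov (x k) (x (Suc k)) c d = cl (x (Suc k)) - cl (x k)" if "k < N" for k
    using assms(1) that \<open>c \<le> d\<close> unfolding ov_def cl_def by (auto simp: min_def max_def)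
  then have "(\<Sum>k<N. ov (x k) (x (Suc k)) c d) = (\<Sum>k<N. cl (x (Suc k)) - cl (x k))"
    by (intro sum.cong) auto
  also have "\<dots> = cl (x N) - cl (x 0)" by (rule sum_lessThan_telescope)
  also have "\<dots> = d - c" using assms unfolding cl_def by simp
  finally show ?thesis .
qed

lemma sup_min_lim:
  fixes G :: "nat \<Rightarrow> ennreal"
  assumes "incseq G" "G \<longlonglongrightarrow> g"
  shows "(SUP j. min (G j) (of_nat j)) = g"
proof -
  have inc: "incseq (\<lambda>j. min (G j) (of_nat j))"
    using assms(1) unfolding incseq_def by (metis min.mono of_nat_mono)
  have "(\<lambda>j. min (G j) (of_nat j)) \<longlonglongrightarrow> min g top"
    by (intro tendsto_min assms(2) of_nat_tendsto_top_ennreal)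
  then have "(\<lambda>j. min (G j) (of_nat j)) \<longlonglongrightarrow> g" by simp
  from LIMSEQ_unique[OF LIMSEQ_SUP[OF inc] this] show ?thesis .
qed

theorem lemma2p8:
  fixes \<iota> :: "'a::{metric_space, complete_space} \<Rightarrow> linf"
    and g :: "'a \<Rightarrow> ennreal"
    and G :: "nat \<Rightarrow> 'a \<Rightarrow> ennreal"
    and p :: "nat \<Rightarrow> nat \<Rightarrow> 'a"
    and n :: "nat \<Rightarrow> nat"
    and \<gamma> :: "real \<Rightarrow> 'a"
  assumes separable: "separable_space (euclidean :: 'a topology)"
    and isometry: "\<And>x y. dist (\<iota> x) (\<iota> y) = dist x y"
    and g_lsc: "lsc g"
    and G_cont: "\<And>i. continuous_on UNIV (G i)"
    and G_mono: "\<And>i j x. i \<le> j \<Longrightarrow> G i x \<le> G j x"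
    and G_lim: "\<And>x. (\<lambda>i. G i x) \<longlonglongrightarrow> g x"
    and n_pos: "\<And>i. n i \<ge> 1"
    and len_bdd: "\<exists>B. \<forall>i. dpath_len (p i) (n i) \<le> B"
    and curve: "continuous_on {0..1} \<gamma>"
    and conv_unif: "uniform_limit {0..1} (\<lambda>i. interp_curve \<iota> (p i) (n i)) (\<iota> \<circ> \<gamma>) sequentially"
    and conv_mesh: "(\<lambda>i. dpath_mesh (p i) (n i)) \<longlonglongrightarrow> 0"
  shows "line_integral g \<gamma> \<le>
           liminf (\<lambda>i. \<Sum>k<n i. G i (p i k) * ennreal (dist (p i k) (p i (Suc k))))"
proof -
  define Len where "Len i = dpath_len (p i) (n i)" for i
  define T where "T i = dpath_t (p i) (n i)" for i
  define gi where "gi i = interp_curve \<iota> (p i) (n i)" for i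
  define Lam where "Lam = liminf (\<lambda>i. ennreal (Len i))"
  obtain B where B: "\<And>i. Len i \<le> B" using len_bdd unfolding Len_def by blast
  have Len_nn: "\<And>i. Len i \<ge> 0" unfolding Len_def by (rule dpath_len_nonneg)
  have "Lam \<le> liminf (\<lambda>i. ennreal B)" unfolding Lam_def
    by (intro Liminf_mono always_eventually allI ennreal_leI B)
  then have LamB: "Lam \<le> ennreal B" by (simp add: Liminf_const)
  then have Lam_fin: "Lam < top" using ennreal_less_top by (metis le_less_trans)
  define Lr where "Lr = enn2real Lam"
  have Lam_eq: "Lam = ennreal Lr" unfolding Lr_def using Lam_fin by simp
  have Lr_nn: "Lr \<ge> 0" unfolding Lr_def by simp
  define CL where "CL = curve_length \<gamma>"
  have lip: "\<And>i u v. u \<in> {0..1} \<Longrightarrow> v \<in> {0..1} \<Longrightarrow>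
      dist (interp_curve \<iota> (p i) (n i) u) (interp_curve \<iota> (p i) (n i) v) \<le> Len i * \<bar>v - u\<bar>"
    unfolding Len_def by (rule interp_lip[OF isometry])
  have lsc: "CL a b \<le> ennreal ((b - a) * Lr)" if "0 \<le> a" "a \<le> b" "b \<le> 1" for a b
  proof -
    have "CL a b \<le> ennreal (b - a) * Lam"
      unfolding CL_def Lam_def by (rule CL_lsc[OF isometry conv_unif lip Len_nn that])
    also have "\<dots> = ennreal ((b - a) * Lr)" using that Lr_nn by (simp add: Lam_eq ennreal_mult)
    finally show ?thesis .
  qed
  define sr where "sr t = enn2real (CL 0 t)" for t
  have CLfin: "CL 0 t = ennreal (sr t)" if "0 \<le> t" "t \<le> 1" for t
  proof -
    have "CL 0 t < top" using lsc[of 0 t] that ennreal_less_top by (metis le_less_trans order_refl)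
    then show ?thesis unfolding sr_def by simp
  qed
  have sr_nn: "sr t \<ge> 0" for t unfolding sr_def by simp
  have F1: "sr a + dist (\<gamma> a) (\<gamma> b) \<le> sr b" if "0 \<le> a" "a \<le> b" "b \<le> 1" for a b
  proof -
    have "CL 0 a + ennreal (dist (\<gamma> a) (\<gamma> b)) \<le> CL 0 b"
      unfolding CL_def by (rule CL_add_dist) (use that in auto)
    moreover have "ennreal (sr a + dist (\<gamma> a) (\<gamma> b)) = ennreal (sr a) + ennreal (dist (\<gamma> a) (\<gamma> b))"
      by (rule ennreal_plus) (simp_all add: sr_nn)
    ultimately have "ennreal (sr a + dist (\<gamma> a) (\<gamma> b)) \<le> ennreal (sr b)"
      using CLfin[of a] CLfin[of b] that by simp
    then show ?thesis using sr_nn by (simp del: ennreal_plus)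
  qed
  have F2: "sr b \<le> sr a + (b - a) * Lr" if "0 \<le> a" "a \<le> b" "b \<le> 1" for a b
  proof -
    have "CL 0 b \<le> CL 0 a + CL a b" unfolding CL_def by (rule CL_split) (use that in auto)
    also have "\<dots> \<le> ennreal (sr a) + ennreal ((b - a) * Lr)"
      using CLfin[of a] lsc[OF that] that by (intro add_mono) auto
    also have "\<dots> = ennreal (sr a + (b - a) * Lr)" using sr_nn that Lr_nn by (simp add: ennreal_plus)
    finally have X: "ennreal (sr b) \<le> ennreal (sr a + (b - a) * Lr)" using CLfin[of b] that by simp
    show ?thesis using X[unfolded ennreal_le_iff2] sr_nn[of b] sr_nn[of a] mult_nonneg_nonneg[of "b - a" Lr] that Lr_nn by auto
  qed
  have sr_mono: "sr a \<le> sr b" if "0 \<le> a" "a \<le> b" "b \<le> 1" for a b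
    using F1[OF that] zero_le_dist[of "\<gamma> a" "\<gamma> b"] by linarith
  have sr0: "sr 0 = 0"
  proof -
    have "CL 0 0 \<le> ennreal 0" using lsc[of 0 0] by simp
    then show ?thesis unfolding sr_def by simp
  qed
  have same: "\<gamma> a = \<gamma> b" if "a \<in> {0..1}" "b \<in> {0..1}" "sr a = sr b" for a b
  proof (cases "a \<le> b")
    case True then show ?thesis using F1[of a b] that by simp
  next
    case False then show ?thesis using F1[of b a] that by simp
  qed
  have sr_lip: "\<bar>sr b - sr a\<bar> \<le> Lr * \<bar>b - a\<bar>" if "a \<in> {0..1}" "b \<in> {0..1}" for a b
  proof (cases "a \<le> b")
    case True then show ?thesis using F2[of a b] sr_mono[of a b] that by (simp add: algebra_simps)
  next
    case False then show ?thesis using F2[of b a] sr_mono[of b a] that by (simp add: algebra_simps)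
  qed
  have sr_cont: "continuous_on {0..1} sr"
    unfolding continuous_on_iff
  proof (intro ballI allI impI)
    fix x e :: real assume x: "x \<in> {0..1}" and e: "0 < e"
    show "\<exists>d>0. \<forall>x'\<in>{0..1}. dist x' x < d \<longrightarrow> dist (sr x') (sr x) < e"
    proof (intro exI[of _ "e / (Lr + 1)"] conjI ballI impI)
      show "0 < e / (Lr + 1)" using e Lr_nn by simp
      fix x' assume x': "x' \<in> {0..1}" and d: "dist x' x < e / (Lr + 1)"
      have "dist (sr x') (sr x) \<le> Lr * dist x' x" using sr_lip[OF x x'] by (simp add: dist_real_def)
      also have "\<dots> \<le> Lr * (e / (Lr + 1))" using d Lr_nn by (intro mult_left_mono) auto
      also have "\<dots> < e" using e Lr_nn by (simp add: field_simps)
      finally show "dist (sr x') (sr x) < e" .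
    qed
  qed
  define R where "R = sr 1"
  have R_nn: "R \<ge> 0" unfolding R_def by (rule sr_nn)
  define tt where "tt s = (SOME t. t \<in> {0..1} \<and> CL 0 t = ennreal s)" for s
  have tt: "tt s \<in> {0..1} \<and> sr (tt s) = s" if s0: "0 \<le> s" "s \<le> R" for s
  proof -
    obtain t0 where t0: "0 \<le> t0" "t0 \<le> 1" "sr t0 = s"
      using IVT'[of sr 0 s 1] sr_cont sr0 s0 unfolding R_def by auto
    then have "t0 \<in> {0..1} \<and> CL 0 t0 = ennreal s" using CLfin by auto
    then have "tt s \<in> {0..1} \<and> CL 0 (tt s) = ennreal s" unfolding tt_def by (rule someI)
    then show ?thesis using s0 unfolding sr_def by simp
  qed
  define gt where "gt s = \<gamma> (tt s)" for s
  have gt_lip: "dist (gt s) (gt s') \<le> \<bar>s - s'\<bar>" if "s \<in> {0..R}" "s' \<in> {0..R}" for s s'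
  proof (cases "tt s \<le> tt s'")
    case True then show ?thesis using F1[of "tt s" "tt s'"] tt[of s] tt[of s'] that unfolding gt_def by auto
  next
    case False then show ?thesis using F1[of "tt s'" "tt s"] tt[of s] tt[of s'] that unfolding gt_def
      by (auto simp: dist_commute)
  qed
  have gt_cont: "continuous_on {0..R} gt"
    unfolding continuous_on_iff
  proof (intro ballI allI impI)
    fix x e :: real assume x: "x \<in> {0..R}" and e: "0 < e"
    show "\<exists>d>0. \<forall>x'\<in>{0..R}. dist x' x < d \<longrightarrow> dist (gt x') (gt x) < e"
    proof (intro exI[of _ e] conjI ballI impI)
      fix x' assume x': "x' \<in> {0..R}" and d: "dist x' x < e"
      show "dist (gt x') (gt x) < e" using gt_lip[OF x' x] d by (simp add: dist_real_def)
    qed (use e in simp)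
  qed
  have rect: "CL 0 1 < top" using CLfin[of 1] by simp
  have LI: "line_integral g \<gamma> = (\<integral>\<^sup>+ s. g (gt s) * indicator {0..R} s \<partial>lborel)"
    using rect unfolding line_integral_def gt_def tt_def R_def sr_def CL_def by simp
  define S where "S f i = (\<Sum>k<n i. ennreal (f (p i k)) * ennreal (dist (p i k) (p i (Suc k))))"
    for f :: "'a \<Rightarrow> real" and i
  have core: "(\<integral>\<^sup>+ s. ennreal (f (gt s)) * indicator {0..R} s \<partial>lborel) \<le> liminf (S f)"
    if fc: "continuous_on UNIV f" and fnn: "\<And>x. 0 \<le> f x" for f :: "'a \<Rightarrow> real"
  proof (rule ennreal_le_epsilon)
    fix e :: real assume e: "0 < e"
    define \<epsilon> where "\<epsilon> = e / (3 * Lr + 1)"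
    have \<epsilon>: "\<epsilon> > 0" unfolding \<epsilon>_def using e Lr_nn by simp
    have e3: "3 * \<epsilon> * Lr \<le> e"
    proof -
      have "3 * \<epsilon> * Lr \<le> \<epsilon> * (3 * Lr + 1)" using \<epsilon> by (simp add: algebra_simps)
      also have "\<dots> = e" unfolding \<epsilon>_def using Lr_nn by simp
      finally show ?thesis .
    qed
    have fgc: "continuous_on {0..1} (f \<circ> \<gamma>)"
      by (rule continuous_on_compose[OF curve continuous_on_subset[OF fc]]) simp
    have "uniformly_continuous_on {0..1} (f \<circ> \<gamma>)"
      by (rule compact_uniformly_continuous[OF fgc]) simp
    then obtain \<delta>1 where \<delta>1: "\<delta>1 > 0"
      "\<And>t t'. t \<in> {0..1} \<Longrightarrow> t' \<in> {0..1} \<Longrightarrow> dist t' t < \<delta>1 \<Longrightarrow> dist (f (\<gamma> t')) (f (\<gamma> t)) < \<epsilon>"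
      unfolding uniformly_continuous_on_def using \<epsilon> by (metis comp_apply)
    obtain \<delta>2 where \<delta>2: "\<delta>2 > 0" "\<And>t x. t \<in> {0..1} \<Longrightarrow> dist x (\<gamma> t) < \<delta>2 \<Longrightarrow> f (\<gamma> t) - \<epsilon> < f x"
      using near_compact_cont[OF fc curve \<epsilon>] by blast
    obtain m :: nat where m: "m > 0" "inverse (real m) < \<delta>1"
      using ex_inverse_of_nat_less[OF \<delta>1(1)] by blast
    define \<tau> where "\<tau> l = real l / real m" for l
    have \<tau>0: "\<tau> 0 = 0" unfolding \<tau>_def by simp
    have \<tau>m: "\<tau> m = 1" unfolding \<tau>_def using m by simp
    have \<tau>d: "\<tau> (Suc l) - \<tau> l = 1 / m" for l unfolding \<tau>_def by (simp add: diff_divide_distrib[symmetric])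
    have \<tau>mono: "\<forall>l<m. \<tau> l \<le> \<tau> (Suc l)" using \<tau>d m by (simp add: algebra_simps)
    have \<tau>in: "\<tau> l \<in> {0..1}" if "l \<le> m" for l unfolding \<tau>_def using that m by auto
    define cc where "cc l = f (\<gamma> (\<tau> l))" for l
    have uc: "\<bar>f (\<gamma> t) - cc l\<bar> < \<epsilon>" if "l < m" "\<tau> l \<le> t" "t \<le> \<tau> (Suc l)" for t l
    proof -
      have tl: "\<tau> l \<in> {0..1}" "\<tau> (Suc l) \<in> {0..1}" using \<tau>in that by auto
      then have t: "t \<in> {0..1}" using that by auto
      have "dist t (\<tau> l) \<le> 1 / m" using that \<tau>d[of l] by (simp add: dist_real_def)
      also have "\<dots> < \<delta>1" using m by (simp add: inverse_eq_divide)
      finally show ?thesis using \<delta>1(2)[OF tl(1) t] unfolding cc_def by (simp add: dist_real_def)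
    qed
    have upper: "(\<integral>\<^sup>+ s. ennreal (f (gt s)) * indicator {0..R} s \<partial>lborel) \<le> ennreal (\<Sum>l<m. (cc l + \<epsilon>) * (Lr / m))"
    proof -
      have pw: "ennreal (f (gt s)) * indicator {0..R} s \<le>
          (\<Sum>l<m. ennreal (cc l + \<epsilon>) * indicator {sr (\<tau> l)..sr (\<tau> (Suc l))} s)" for s
      proof (cases "s \<in> {0..R}")
        case False then show ?thesis by simp
      next
        case True
        define l where "l = (GREATEST l. l < m \<and> sr (\<tau> l) \<le> s)"
        have P0: "0 < m \<and> sr (\<tau> 0) \<le> s" using m True sr0 \<tau>0 by simp
        have l: "l < m \<and> sr (\<tau> l) \<le> s" unfolding l_def
          by (rule GreatestI_nat[of _ 0 m]) (use P0 in auto)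
        have lmax: "y \<le> l" if "y < m \<and> sr (\<tau> y) \<le> s" for y unfolding l_def
          by (rule Greatest_le_nat[of _ y m]) (use that in auto)
        have up: "s \<le> sr (\<tau> (Suc l))"
        proof (cases "Suc l = m")
          case True then show ?thesis using \<open>s \<in> {0..R}\<close> \<tau>m unfolding R_def by simp
        next
          case False
          then have "Suc l < m" using l by simp
          show ?thesis
          proof (rule ccontr)
            assume "\<not> ?thesis"
            then have "Suc l \<le> l" using lmax[of "Suc l"] \<open>Suc l < m\<close> by simp
            then show False by simp
          qed
        qed
        define ts where "ts = tt s"
        have ts: "ts \<in> {0..1}" "sr ts = s" using tt[of s] True unfolding ts_def by auto
        have tl: "\<tau> l \<in> {0..1}" "\<tau> (Suc l) \<in> {0..1}" using \<tau>in l by auto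
        have "\<exists>t2. \<tau> l \<le> t2 \<and> t2 \<le> \<tau> (Suc l) \<and> \<gamma> ts = \<gamma> t2"
        proof (cases "ts < \<tau> l")
          case True
          have "sr ts \<le> sr (\<tau> l)" using sr_mono[of ts "\<tau> l"] True ts tl by auto
          then have "sr ts = sr (\<tau> l)" using l ts by simp
          then have "\<gamma> ts = \<gamma> (\<tau> l)" using same ts tl by blast
          then show ?thesis using \<tau>mono l by (intro exI[of _ "\<tau> l"]) auto
        next
          case False
          show ?thesis
          proof (cases "\<tau> (Suc l) < ts")
            case True
            have "sr (\<tau> (Suc l)) \<le> sr ts" using sr_mono[of "\<tau> (Suc l)" ts] True ts tl by auto
            then have "sr ts = sr (\<tau> (Suc l))" using up ts by simp
            then have "\<gamma> ts = \<gamma> (\<tau> (Suc l))" using same ts tl by blast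
            then show ?thesis using \<tau>mono l by (intro exI[of _ "\<tau> (Suc l)"]) auto
          next
            case False
            then show ?thesis using \<open>\<not> ts < \<tau> l\<close> by (intro exI[of _ ts]) auto
          qed
        qed
        then obtain t2 where t2: "\<tau> l \<le> t2" "t2 \<le> \<tau> (Suc l)" "gt s = \<gamma> t2"
          unfolding gt_def ts_def by blast
        have fle: "f (gt s) \<le> cc l + \<epsilon>" using uc[of l t2] t2 l by auto
        have "ennreal (f (gt s)) * indicator {0..R} s = ennreal (f (gt s))" using True by simp
        also have "\<dots> \<le> ennreal (cc l + \<epsilon>) * indicator {sr (\<tau> l)..sr (\<tau> (Suc l))} s"
          using fle l up by (simp add: ennreal_leI)
        also have "\<dots> \<le> (\<Sum>l<m. ennreal (cc l + \<epsilon>) * indicator {sr (\<tau> l)..sr (\<tau> (Suc l))} s)"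
          by (rule member_le_sum) (use l in auto)
        finally show ?thesis .
      qed
      have "(\<integral>\<^sup>+ s. ennreal (f (gt s)) * indicator {0..R} s \<partial>lborel) \<le>
          (\<integral>\<^sup>+ s. (\<Sum>l<m. ennreal (cc l + \<epsilon>) * indicator {sr (\<tau> l)..sr (\<tau> (Suc l))} s) \<partial>lborel)"
        by (rule nn_integral_mono) (rule pw)
      also have "\<dots> = (\<Sum>l<m. \<integral>\<^sup>+ s. ennreal (cc l + \<epsilon>) * indicator {sr (\<tau> l)..sr (\<tau> (Suc l))} s \<partial>lborel)"
        by (rule nn_integral_sum) simp
      also have "\<dots> = (\<Sum>l<m. ennreal (cc l + \<epsilon>) * ennreal (sr (\<tau> (Suc l)) - sr (\<tau> l)))"
      proof (rule sum.cong[OF refl])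
        fix l assume "l \<in> {..<m}"
        then have "sr (\<tau> l) \<le> sr (\<tau> (Suc l))" using sr_mono \<tau>in \<tau>mono by auto
        then show "(\<integral>\<^sup>+ s. ennreal (cc l + \<epsilon>) * indicator {sr (\<tau> l)..sr (\<tau> (Suc l))} s \<partial>lborel) =
            ennreal (cc l + \<epsilon>) * ennreal (sr (\<tau> (Suc l)) - sr (\<tau> l))"
          by (simp add: nn_integral_cmult_indicator)
      qed
      also have "\<dots> \<le> (\<Sum>l<m. ennreal ((cc l + \<epsilon>) * (Lr / m)))"
      proof (rule sum_mono)
        fix l assume "l \<in> {..<m}"
        then have lm: "l < m" by simp
        have "sr (\<tau> (Suc l)) \<le> sr (\<tau> l) + (\<tau> (Suc l) - \<tau> l) * Lr"
          using F2[of "\<tau> l" "\<tau> (Suc l)"] \<tau>in[of l] \<tau>in[of "Suc l"] \<tau>mono lm by auto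
        then have d: "sr (\<tau> (Suc l)) - sr (\<tau> l) \<le> Lr / m" using \<tau>d[of l] by simp
        have cc0: "0 \<le> cc l + \<epsilon>" using fnn[of "\<gamma> (\<tau> l)"] \<epsilon> unfolding cc_def by simp
        have "ennreal (cc l + \<epsilon>) * ennreal (sr (\<tau> (Suc l)) - sr (\<tau> l)) \<le> ennreal (cc l + \<epsilon>) * ennreal (Lr / m)"
          using d by (intro mult_left_mono ennreal_leI) auto
        also have "\<dots> = ennreal ((cc l + \<epsilon>) * (Lr / m))" by (rule ennreal_mult[symmetric]) (use cc0 Lr_nn in auto)
        finally show "ennreal (cc l + \<epsilon>) * ennreal (sr (\<tau> (Suc l)) - sr (\<tau> l)) \<le> ennreal ((cc l + \<epsilon>) * (Lr / m))" .
      qed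
      also have "\<dots> = ennreal (\<Sum>l<m. (cc l + \<epsilon>) * (Lr / m))"
        using fnn \<epsilon> Lr_nn unfolding cc_def by (intro sum_ennreal) (auto intro!: mult_nonneg_nonneg add_nonneg_nonneg less_imp_le)
      finally show ?thesis .
    qed
    define A where "A = (\<Sum>l<m. max 0 (cc l - 2 * \<epsilon>)) / m"
    have A_nn: "A \<ge> 0" unfolding A_def by (intro divide_nonneg_nonneg sum_nonneg) auto
    have per_i: "A * Len i \<le> (\<Sum>k<n i. f (p i k) * dist (p i k) (p i (Suc k)))"
      if mesh: "dpath_mesh (p i) (n i) < \<delta>2 / 2"
      and unif: "\<forall>t\<in>{0..1}. dist (gi i t) (\<iota> (\<gamma> t)) < \<delta>2 / 2" for i
    proof (cases "Len i > 0")
      case False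
      then have "Len i = 0" using Len_nn[of i] by simp
      then show ?thesis using fnn by (simp add: sum_nonneg)
    next
      case Lpos: True
      define N where "N = n i"
      define q where "q = p i"
      have Lq: "dpath_len q N > 0" using Lpos unfolding Len_def q_def N_def by simp
      have Tq: "T i = dpath_t q N" unfolding T_def q_def N_def by simp
      have T0: "T i 0 = 0" unfolding Tq by simp
      have TN: "T i N = 1" unfolding Tq by (rule dpath_t_n[OF Lq])
      have Tmono: "T i a \<le> T i b" if "a \<le> b" for a b unfolding Tq by (rule dpath_t_mono[OF that])
      have Tin: "T i k \<in> {0..1}" if "k \<le> N" for k
        using Tmono[of 0 k] Tmono[of k N] that T0 TN by auto
      let ?w = "\<lambda>k l. ov (T i k) (T i (Suc k)) (\<tau> l) (\<tau> (Suc l))"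
      have w1: "(\<Sum>l<m. ?w k l) = T i (Suc k) - T i k" if "k < N" for k
      proof -
        have a: "\<tau> 0 \<le> T i k" using \<tau>0 Tin[of k] that by simp
        have b: "T i (Suc k) \<le> \<tau> m" using \<tau>m Tin[of "Suc k"] that by simp
        have c: "T i k \<le> T i (Suc k)" by (rule Tmono) simp
        have "(\<Sum>l<m. ?w k l) = (\<Sum>l<m. ov (\<tau> l) (\<tau> (Suc l)) (T i k) (T i (Suc k)))"
          by (simp add: ov_comm)
        also have "\<dots> = T i (Suc k) - T i k"
          by (rule ov_sum[OF \<tau>mono a c b])
        finally show ?thesis .
      qed
      have w2: "(\<Sum>k<N. ?w k l) = \<tau> (Suc l) - \<tau> l" if "l < m" for l
      proof -
        have a: "T i 0 \<le> \<tau> l" using T0 \<tau>in[of l] that by simp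
        have b: "\<tau> (Suc l) \<le> T i N" using TN \<tau>in[of "Suc l"] that by simp
        have c: "\<tau> l \<le> \<tau> (Suc l)" using \<tau>mono that by simp
        have d: "\<forall>k<N. T i k \<le> T i (Suc k)" using Tmono by simp
        show ?thesis by (rule ov_sum[OF d a c b])
      qed
      have ddq: "dist (q k) (q (Suc k)) = Len i * (T i (Suc k) - T i k)" if "k < N" for k
        unfolding Len_def Tq q_def N_def[symmetric] using dd_eq[OF that, of q] q_def by simp
      have key: "max 0 (cc l - 2 * \<epsilon>) * ?w k l \<le> f (q k) * ?w k l" if k: "k < N" and l: "l < m" for k l
      proof (cases "?w k l > 0")
        case False
        then have "?w k l = 0" using ov_nonneg[of "T i k" "T i (Suc k)" "\<tau> l" "\<tau> (Suc l)"] by simp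
        then show ?thesis by simp
      next
        case True
        define t' where "t' = max (T i k) (\<tau> l)"
        have t'lt: "t' < min (T i (Suc k)) (\<tau> (Suc l))" using True unfolding t'_def ov_def by (auto simp: less_max_iff_disj min_def max_def split: if_splits)
        have t'in: "t' \<in> {0..1}" using Tin[of k] \<tau>in[of l] \<tau>in[of "Suc l"] k l t'lt unfolding t'_def by auto
        have "dist (\<iota> (q k)) (gi i t') \<le> dpath_len q N * \<bar>t' - dpath_t q N k\<bar>"
          using interp_vertex[OF isometry, of t' k N q] t'in k unfolding gi_def q_def N_def
          by (simp add: dist_commute)
        also have "\<dots> \<le> Len i * (T i (Suc k) - T i k)"
          using t'lt Lpos unfolding Tq[symmetric] Len_def q_def[symmetric] N_def[symmetric] t'_def
          by (intro mult_left_mono) auto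
        also have "\<dots> = dist (q k) (q (Suc k))" using ddq[OF k] by simp
        also have "\<dots> \<le> dpath_mesh q N" unfolding dpath_mesh_def using k by (intro Max_ge) auto
        also have "\<dots> < \<delta>2 / 2" using mesh unfolding q_def N_def by simp
        finally have d1: "dist (\<iota> (q k)) (gi i t') < \<delta>2 / 2" .
        have d2: "dist (gi i t') (\<iota> (\<gamma> t')) < \<delta>2 / 2" using unif t'in by blast
        have "dist (q k) (\<gamma> t') = dist (\<iota> (q k)) (\<iota> (\<gamma> t'))" by (simp add: isometry)
        also have "\<dots> \<le> dist (\<iota> (q k)) (gi i t') + dist (gi i t') (\<iota> (\<gamma> t'))" by (rule dist_triangle)
        also have "\<dots> < \<delta>2" using d1 d2 by simp
        finally have "f (\<gamma> t') - \<epsilon> < f (q k)" using \<delta>2(2)[OF t'in] by blast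
        moreover have "\<bar>f (\<gamma> t') - cc l\<bar> < \<epsilon>" using uc[OF l] t'lt unfolding t'_def by auto
        ultimately have "max 0 (cc l - 2 * \<epsilon>) \<le> f (q k)" using fnn[of "q k"] by auto
        then show ?thesis using ov_nonneg by (intro mult_right_mono) auto
      qed
      have "A * Len i = (\<Sum>l<m. Len i * (max 0 (cc l - 2 * \<epsilon>) * (\<tau> (Suc l) - \<tau> l)))"
        unfolding A_def \<tau>d by (simp add: sum_distrib_left sum_divide_distrib algebra_simps)
      also have "\<dots> = (\<Sum>l<m. \<Sum>k<N. Len i * (max 0 (cc l - 2 * \<epsilon>) * ?w k l))"
      proof (rule sum.cong[OF refl])
        fix l assume "l \<in> {..<m}"
        then have "(\<Sum>k<N. ?w k l) = \<tau> (Suc l) - \<tau> l" using w2 by simp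
        then show "Len i * (max 0 (cc l - 2 * \<epsilon>) * (\<tau> (Suc l) - \<tau> l)) = (\<Sum>k<N. Len i * (max 0 (cc l - 2 * \<epsilon>) * ?w k l))"
          by (simp add: sum_distrib_left[symmetric])
      qed
      also have "\<dots> \<le> (\<Sum>l<m. \<Sum>k<N. Len i * (f (q k) * ?w k l))"
      proof (rule sum_mono, rule sum_mono)
        fix l k assume "l \<in> {..<m}" "k \<in> {..<N}"
        then have "max 0 (cc l - 2 * \<epsilon>) * ?w k l \<le> f (q k) * ?w k l" using key by simp
        then show "Len i * (max 0 (cc l - 2 * \<epsilon>) * ?w k l) \<le> Len i * (f (q k) * ?w k l)"
          by (rule mult_left_mono) (rule Len_nn)
      qed
      also have "\<dots> = (\<Sum>k<N. \<Sum>l<m. Len i * (f (q k) * ?w k l))"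
        by (rule sum.swap)
      also have "\<dots> = (\<Sum>k<N. f (q k) * dist (q k) (q (Suc k)))"
      proof (rule sum.cong[OF refl])
        fix k assume "k \<in> {..<N}"
        then have k: "k < N" by simp
        have "(\<Sum>l<m. Len i * (f (q k) * ?w k l)) = Len i * f (q k) * (\<Sum>l<m. ?w k l)"
          by (simp add: sum_distrib_left algebra_simps)
        also have "\<dots> = f (q k) * dist (q k) (q (Suc k))" using w1[OF k] ddq[OF k] by simp
        finally show "(\<Sum>l<m. Len i * (f (q k) * ?w k l)) = f (q k) * dist (q k) (q (Suc k))" .
      qed
      finally show ?thesis unfolding q_def N_def .
    qed
    have ev1: "eventually (\<lambda>i. dpath_mesh (p i) (n i) < \<delta>2 / 2) sequentially"
      using order_tendstoD(2)[OF conv_mesh, of "\<delta>2 / 2"] \<delta>2(1) by linarith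
    have ev2: "eventually (\<lambda>i. \<forall>t\<in>{0..1}. dist (gi i t) (\<iota> (\<gamma> t)) < \<delta>2 / 2) sequentially"
    proof -
      have "\<delta>2 / 2 > 0" using \<delta>2(1) by simp
      from uniform_limit_iff[THEN iffD1, OF conv_unif, rule_format, OF this]
      show ?thesis by (simp add: gi_def o_def)
    qed
    have ev: "eventually (\<lambda>i. ennreal A * ennreal (Len i) \<le> S f i) sequentially"
    proof (rule eventually_mono[OF eventually_conj[OF ev1 ev2]])
      fix i assume "dpath_mesh (p i) (n i) < \<delta>2 / 2 \<and> (\<forall>t\<in>{0..1}. dist (gi i t) (\<iota> (\<gamma> t)) < \<delta>2 / 2)"
      then have "A * Len i \<le> (\<Sum>k<n i. f (p i k) * dist (p i k) (p i (Suc k)))" using per_i by blast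
      then have "ennreal (A * Len i) \<le> ennreal (\<Sum>k<n i. f (p i k) * dist (p i k) (p i (Suc k)))"
        by (rule ennreal_leI)
      also have "\<dots> = S f i" unfolding S_def using fnn
        by (subst sum_ennreal[symmetric]) (auto simp: ennreal_mult)
      finally have "ennreal (A * Len i) \<le> S f i" .
      then show "ennreal A * ennreal (Len i) \<le> S f i" by (simp only: ennreal_mult'[OF A_nn])
    qed
    have lower: "ennreal (A * Lr) \<le> liminf (S f)"
    proof -
      have "ennreal (A * Lr) = ennreal A * Lam" using A_nn Lr_nn by (simp add: Lam_eq ennreal_mult)
      also have "\<dots> = liminf (\<lambda>i. ennreal A * ennreal (Len i))"
        unfolding Lam_def by (rule liminf_cmult_ennreal[symmetric]) simp
      also have "\<dots> \<le> liminf (S f)" by (rule Liminf_mono[OF ev])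
      finally show ?thesis .
    qed
    have comb: "(\<Sum>l<m. (cc l + \<epsilon>) * (Lr / m)) \<le> A * Lr + 3 * \<epsilon> * Lr"
    proof -
      have "(\<Sum>l<m. (cc l + \<epsilon>) * (Lr / m)) \<le> (\<Sum>l<m. (max 0 (cc l - 2 * \<epsilon>) + 3 * \<epsilon>) * (Lr / m))"
        using Lr_nn m by (intro sum_mono mult_right_mono) auto
      also have "\<dots> = A * Lr + 3 * \<epsilon> * Lr"
        unfolding A_def using m by (simp add: sum_distrib_left sum.distrib sum_divide_distrib algebra_simps)
      finally show ?thesis .
    qed
    have "(\<integral>\<^sup>+ s. ennreal (f (gt s)) * indicator {0..R} s \<partial>lborel) \<le> ennreal (A * Lr + 3 * \<epsilon> * Lr)"
      using upper comb by (meson ennreal_leI order_trans)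
    also have "\<dots> = ennreal (A * Lr) + ennreal (3 * \<epsilon> * Lr)"
      using A_nn Lr_nn \<epsilon> by (intro ennreal_plus) auto
    also have "\<dots> \<le> liminf (S f) + ennreal e"
      using lower e3 by (intro add_mono ennreal_leI) auto
    finally show "(\<integral>\<^sup>+ s. ennreal (f (gt s)) * indicator {0..R} s \<partial>lborel) \<le> liminf (S f) + ennreal e" .
  qed
  define fj where "fj j x = enn2real (min (G j x) (of_nat j))" for j x
  have fj_e: "ennreal (fj j x) = min (G j x) (of_nat j)" for j x
  proof -
    have "min (G j x) (of_nat j) < top" by (metis min.strict_coboundedI2 of_nat_less_top)
    then show ?thesis unfolding fj_def by simp
  qed
  have fj_cont: "continuous_on UNIV (fj j)" for j
  proof -
    have hc: "continuous_on UNIV (\<lambda>x. min (G j x) (of_nat j))"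
      by (intro continuous_on_min G_cont continuous_on_const)
    show ?thesis unfolding continuous_on_def
    proof (intro ballI)
      fix x :: 'a
      have "((\<lambda>y. min (G j y) (of_nat j)) \<longlongrightarrow> min (G j x) (of_nat j)) (at x within UNIV)"
        using hc unfolding continuous_on_def by simp
      then have "((\<lambda>y. min (G j y) (of_nat j)) \<longlongrightarrow> ennreal (fj j x)) (at x within UNIV)"
        by (simp add: fj_e)
      then show "(fj j \<longlongrightarrow> fj j x) (at x within UNIV)"
        unfolding fj_def[of j] by (rule tendsto_enn2real) simp
    qed
  qed
  have step: "(\<integral>\<^sup>+ s. ennreal (fj j (gt s)) * indicator {0..R} s \<partial>lborel) \<le>
      liminf (\<lambda>i. \<Sum>k<n i. G i (p i k) * ennreal (dist (p i k) (p i (Suc k))))" for j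
  proof -
    have "(\<integral>\<^sup>+ s. ennreal (fj j (gt s)) * indicator {0..R} s \<partial>lborel) \<le> liminf (S (fj j))"
      by (rule core[OF fj_cont]) (simp add: fj_def)
    also have "\<dots> \<le> liminf (\<lambda>i. \<Sum>k<n i. G i (p i k) * ennreal (dist (p i k) (p i (Suc k))))"
    proof (intro Liminf_mono eventually_sequentiallyI)
      fix i assume "j \<le> i"
      then have "ennreal (fj j x) \<le> G i x" for x
        unfolding fj_e using G_mono[of j i x] by (metis min.coboundedI1)
      then show "S (fj j) i \<le> (\<Sum>k<n i. G i (p i k) * ennreal (dist (p i k) (p i (Suc k))))"
        unfolding S_def by (intro sum_mono mult_right_mono) auto
    qed
    finally show ?thesis .
  qed
  have incG: "incseq (\<lambda>j. G j x)" for x using G_mono by (simp add: incseq_def)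
  have meas: "(\<lambda>s. ennreal (fj j (gt s)) * indicator {0..R} s) \<in> borel_measurable lborel" for j
  proof -
    have "continuous_on {0..R} (fj j \<circ> gt)"
      by (rule continuous_on_compose[OF gt_cont continuous_on_subset[OF fj_cont]]) simp
    then have "(\<lambda>s. indicator {0..R} s *\<^sub>R (fj j \<circ> gt) s) \<in> borel_measurable borel"
      by (intro borel_measurable_continuous_on_indicator) auto
    then have "(\<lambda>s. ennreal (indicator {0..R} s *\<^sub>R (fj j \<circ> gt) s)) \<in> borel_measurable lborel"
      by simp
    moreover have "ennreal (indicator {0..R} s *\<^sub>R (fj j \<circ> gt) s) = ennreal (fj j (gt s)) * indicator {0..R} s" for s
      by (cases "s \<in> {0..R}") auto
    ultimately show ?thesis by simp
  qed
  have inc: "incseq (\<lambda>j s. ennreal (fj j (gt s)) * indicator {0..R} s)"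
    unfolding incseq_def le_fun_def fj_e
    using G_mono by (auto intro!: mult_right_mono min.mono)
  have sup: "(SUP j. ennreal (fj j (gt s)) * indicator {0..R} s) = g (gt s) * indicator {0..R} s" for s
  proof (cases "s \<in> {0..R}")
    case True then show ?thesis unfolding fj_e using sup_min_lim[OF incG G_lim] by simp
  next
    case False then show ?thesis by simp
  qed
  have "line_integral g \<gamma> = (SUP j. \<integral>\<^sup>+ s. ennreal (fj j (gt s)) * indicator {0..R} s \<partial>lborel)"
    unfolding LI sup[symmetric] by (rule nn_integral_monotone_convergence_SUP[OF inc meas])
  also have "\<dots> \<le> liminf (\<lambda>i. \<Sum>k<n i. G i (p i k) * ennreal (dist (p i k) (p i (Suc k))))"
    by (rule SUP_least) (rule step)
  finally show ?thesis .
qed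

end
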